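(* Let $f:\mathbb{R}^n\to\mathbb{R}$ be continuously differentiable, convex and $L$-smooth with unique minimizer $0$ and $f(0)=0$. Let $g:\mathbb{R}^n\to\mathbb{R}$ be continuously differentiable and strictly convex with Bregman divergence $D_g(y,x)=g(y)-g(x)-\langle\nabla g(x),y-x\rangle$. Let $\alpha,\beta:[0,\infty)\to\mathbb{R}$ satisfy $e^{\alpha(t)}\ge\dot\beta(t)>0$ for all $t$ and $\beta(t)\to\infty$ as $t\to\infty$. (i) (Convex case, $\mu=0$.) Let $Z:[0,\infty)\to\mathbb{R}^n$ solve $\frac{d}{dt}\nabla g(Z)=-e^{\alpha(t)+\beta(t)}\nabla f(Z)$, and set $\tilde{\mathcal{E}}(t)=D_g(0,Z(t))+e^{\beta(t)}f(Z(t))$. (ii) (Uniformly convex case.) Suppose $f$ is $\mu$-uniformly convex with respect to $g$ for some $\mu>0$, i.e. $D_f(x,y)\ge\mu D_g(x,y)$ for all $x,y$. Let $Z:[0,\infty)\to\mathbb{R}^n$ solve $\frac{d}{dt}\nabla g(Z)=-\frac{e^{\alpha(t)}}{\mu}\nabla f(Z)$, and set $\tilde{\mathcal{E}}(t)=e^{\beta(t)}\big(\mu D_g(0,Z(t))+f(Z(t))\big)$. Then in both cases $\tilde{\mathcal{E}}$ is monotonically non-increasing and $f(Z(t))\le e^{-\beta(t)}\tilde{\mathcal{E}}(0)$ for all $t\ge0$.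
   Context: $D_f$ denotes the Bregman divergence of $f$, defined analogously to $D_g$. *)

theory Defs
  imports "HOL-Analysis.Analysis"
begin

definition strict_convex_on :: "'a::real_vector set \<Rightarrow> ('a \<Rightarrow> real) \<Rightarrow> bool" where
  "strict_convex_on S f \<longleftrightarrow>
     (\<forall>x\<in>S. \<forall>y\<in>S. x \<noteq> y \<longrightarrow> (\<forall>u::real. 0 < u \<and> u < 1 \<longrightarrow>
        f ((1 - u) *\<^sub>R x + u *\<^sub>R y) < (1 - u) * f x + u * f y))"

definition bregman :: "('a::real_inner \<Rightarrow> real) \<Rightarrow> ('a \<Rightarrow> 'a) \<Rightarrow> 'a \<Rightarrow> 'a \<Rightarrow> real" where
  "bregman \<phi> grad\<phi> y x = \<phi> y - \<phi> x - grad\<phi> x \<bullet> (y - x)"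

end

theory Submission
  imports Defs
begin

lemma tangent_ineq:
  fixes f :: "'a::real_inner \<Rightarrow> real"
  assumes cv: "convex_on UNIV f" and d: "(f has_derivative (\<lambda>h. gr \<bullet> h)) (at x)"
  shows "f y \<ge> f x + gr \<bullet> (y - x)"
proof -
  define h where "h u = f (x + u *\<^sub>R (y - x))" for u :: real
  have hc: "convex_on UNIV h"
  proof (rule convex_onI)
    fix t a b :: real assume t: "0 < t" "t < 1"
    have "x + ((1 - t) * a + t * b) *\<^sub>R (y - x) = (1 - t) *\<^sub>R (x + a *\<^sub>R (y - x)) + t *\<^sub>R (x + b *\<^sub>R (y - x))"
      by (simp add: algebra_simps)
    then show "h ((1 - t) *\<^sub>R a + t *\<^sub>R b) \<le> (1 - t) * h a + t * h b"
      unfolding h_def using convex_onD[OF cv, of t] t by simp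
  qed simp
  have "((\<lambda>u. x + u *\<^sub>R (y - x)) has_derivative (\<lambda>u. u *\<^sub>R (y - x))) (at 0)"
    by (auto intro!: derivative_eq_intros)
  moreover have "(f has_derivative (\<lambda>h. gr \<bullet> h)) (at ((\<lambda>u. x + u *\<^sub>R (y - x)) 0))" using d by simp
  ultimately have "((f \<circ> (\<lambda>u. x + u *\<^sub>R (y - x))) has_derivative ((\<lambda>h. gr \<bullet> h) \<circ> (\<lambda>u. u *\<^sub>R (y - x)))) (at 0)"
    by (rule diff_chain_at)
  moreover have "h = f \<circ> (\<lambda>u. x + u *\<^sub>R (y - x))" by (simp add: h_def fun_eq_iff)
  moreover have "(\<lambda>u. gr \<bullet> (u *\<^sub>R (y - x))) = (\<lambda>h. gr \<bullet> h) \<circ> (\<lambda>u. u *\<^sub>R (y - x))" by (simp add: fun_eq_iff)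
  ultimately have "(h has_derivative (\<lambda>u. gr \<bullet> (u *\<^sub>R (y - x)))) (at 0)"
    by simp
  then have "(h has_field_derivative (gr \<bullet> (y - x))) (at 0 within UNIV)"
    unfolding has_field_derivative_def by (simp add: mult.commute[of _ "gr \<bullet> (y - x)"])
  from convex_on_imp_above_tangent[OF hc _ _ _ this, of 1]
  have "h 1 - h 0 \<ge> gr \<bullet> (y - x)" by simp
  then show ?thesis by (simp add: h_def)
qed

lemma strict_imp_convex: "strict_convex_on UNIV g \<Longrightarrow> convex_on UNIV g"
proof (rule convex_onI)
  fix t x y assume a: "strict_convex_on UNIV g" "0 < (t::real)" "t < 1"
  show "g ((1 - t) *\<^sub>R x + t *\<^sub>R y) \<le> (1 - t) * g x + t * g y"
  proof (cases "x = y")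
    case True
    then have "(1 - t) *\<^sub>R x + t *\<^sub>R y = x" by (simp add: scaleR_collapse)
    then show ?thesis using True by (simp add: algebra_simps)
  next
    case False
    then show ?thesis using a unfolding strict_convex_on_def by (simp add: less_imp_le)
  qed
qed simp

lemma vd_quot:
  fixes G :: "real \<Rightarrow> 'a::real_normed_vector"
  assumes "(G has_vector_derivative v) (at t within S)"
  shows "((\<lambda>s. (G s - G t) /\<^sub>R (s - t)) \<longlongrightarrow> v) (at t within S)"
proof -
  from assms have l: "((\<lambda>s. norm ((G s - G t) - (s - t) *\<^sub>R v) / norm (s - t)) \<longlongrightarrow> 0) (at t within S)"
    unfolding has_vector_derivative_def has_derivative_iff_norm by blast
  have "((\<lambda>s. norm ((G s - G t) /\<^sub>R (s - t) - v)) \<longlongrightarrow> 0) (at t within S)"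
  proof (rule Lim_transform_eventually[OF l])
    show "\<forall>\<^sub>F s in at t within S. norm (G s - G t - (s - t) *\<^sub>R v) / norm (s - t) = norm ((G s - G t) /\<^sub>R (s - t) - v)"
      unfolding eventually_at_filter
    proof (intro always_eventually allI impI)
      fix s assume "s \<noteq> t"
      have "(G s - G t - (s - t) *\<^sub>R v) /\<^sub>R (s - t) = (G s - G t) /\<^sub>R (s - t) - ((s - t) / (s - t)) *\<^sub>R v"
        by (simp add: scaleR_diff_right divide_inverse_commute)
      also have "\<dots> = (G s - G t) /\<^sub>R (s - t) - v" using \<open>s \<noteq> t\<close> by simp
      finally have "(G s - G t) /\<^sub>R (s - t) - v = (G s - G t - (s - t) *\<^sub>R v) /\<^sub>R (s - t)" by simp
      then show "norm (G s - G t - (s - t) *\<^sub>R v) / norm (s - t) = norm ((G s - G t) /\<^sub>R (s - t) - v)"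
        by (simp add: divide_inverse_commute)
    qed
  qed
  then show ?thesis using tendsto_norm_zero_iff LIM_zero_cancel by blast
qed

lemma mono_deriv:
  fixes G Z :: "real \<Rightarrow> 'a::real_inner"
  assumes G: "(G has_vector_derivative v) (at t within {0..})"
    and Z: "(Z has_vector_derivative w) (at t within {0..})"
    and pos: "\<And>s. (G s - G t) \<bullet> (Z s - Z t) \<ge> 0" and t: "t \<ge> 0"
  shows "v \<bullet> w \<ge> 0"
proof -
  have le: "at t within {t<..} \<le> at t within {0..}" using t by (intro at_le) auto
  have "((\<lambda>s. ((G s - G t) /\<^sub>R (s - t)) \<bullet> ((Z s - Z t) /\<^sub>R (s - t))) \<longlongrightarrow> v \<bullet> w) (at_right t)"
    by (intro tendsto_inner tendsto_mono[OF le] vd_quot G Z)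
  moreover have "\<forall>\<^sub>F s in at_right t. 0 \<le> ((G s - G t) /\<^sub>R (s - t)) \<bullet> ((Z s - Z t) /\<^sub>R (s - t))"
  proof (intro always_eventually allI)
    fix s
    have eq: "((G s - G t) /\<^sub>R (s - t)) \<bullet> ((Z s - Z t) /\<^sub>R (s - t)) = (inverse (s - t))\<^sup>2 * ((G s - G t) \<bullet> (Z s - Z t))"
      by (simp add: power2_eq_square divide_inverse_commute)
    have nn: "0 \<le> (inverse (s - t))\<^sup>2 * ((G s - G t) \<bullet> (Z s - Z t))"
      using pos[of s] by (intro mult_nonneg_nonneg) simp_all
    show "0 \<le> ((G s - G t) /\<^sub>R (s - t)) \<bullet> ((Z s - Z t) /\<^sub>R (s - t))"
      unfolding eq by (rule nn)
  qed
  ultimately show ?thesis by (rule tendsto_lowerbound) simp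
qed

lemma decr_from_deriv:
  fixes E :: "real \<Rightarrow> real"
  assumes d: "\<And>t. t \<ge> 0 \<Longrightarrow> \<exists>D. (E has_real_derivative D) (at t within {0..}) \<and> D \<le> 0"
    and st: "0 \<le> s" "s \<le> t"
  shows "E t \<le> E s"
proof (rule DERIV_nonpos_imp_decreasing_open[OF st(2)])
  fix x assume x: "s < x" "x < t"
  have "x \<ge> 0" using x st by simp
  then obtain D where D: "(E has_real_derivative D) (at x within {0..})" "D \<le> 0" using d by blast
  have "(E has_real_derivative D) (at x within {0<..})"
    by (rule DERIV_subset[OF D(1)]) auto
  then have "(E has_real_derivative D) (at x)" using x st
    by (subst (asm) at_within_open) auto
  then show "\<exists>y. (E has_real_derivative y) (at x) \<and> y \<le> 0" using D by blast
next
  have "continuous_on {0..} E"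
  proof (rule continuous_on_eq_continuous_within[THEN iffD2], intro ballI)
    fix x :: real assume "x \<in> {0..}"
    then obtain D where "(E has_real_derivative D) (at x within {0..})" using d by auto
    then show "continuous (at x within {0..}) E" by (rule DERIV_continuous)
  qed
  then show "continuous_on {s..t} E" by (rule continuous_on_subset) (use st in auto)
qed


lemma core:
  fixes f g :: "'a::real_inner \<Rightarrow> real" and gradf gradg :: "'a \<Rightarrow> 'a" and Z :: "real \<Rightarrow> 'a"
  assumes f_grad: "\<And>x. (f has_derivative (\<lambda>h. gradf x \<bullet> h)) (at x)"
    and g_grad: "\<And>x. (g has_derivative (\<lambda>h. gradg x \<bullet> h)) (at x)"
    and gcv: "convex_on UNIV g"
    and Zd: "(Z has_vector_derivative w) (at t within {0..})"
    and Gd: "((\<lambda>s. gradg (Z s)) has_vector_derivative (- c) *\<^sub>R gradf (Z t)) (at t within {0..})"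
    and c: "c > 0" and t: "t \<ge> 0"
  shows "gradf (Z t) \<bullet> w \<le> 0"
    and "((\<lambda>s. bregman g gradg 0 (Z s)) has_real_derivative (- c * (gradf (Z t) \<bullet> Z t))) (at t within {0..})"
    and "((\<lambda>s. f (Z s)) has_real_derivative (gradf (Z t) \<bullet> w)) (at t within {0..})"
proof -
  have pos: "(gradg (Z s) - gradg (Z t)) \<bullet> (Z s - Z t) \<ge> 0" for s
  proof -
    have "g (Z t) \<ge> g (Z s) + gradg (Z s) \<bullet> (Z t - Z s)" by (rule tangent_ineq[OF gcv g_grad])
    moreover have "g (Z s) \<ge> g (Z t) + gradg (Z t) \<bullet> (Z s - Z t)" by (rule tangent_ineq[OF gcv g_grad])
    moreover have "(gradg (Z s) - gradg (Z t)) \<bullet> (Z s - Z t) = - (gradg (Z s) \<bullet> (Z t - Z s)) - gradg (Z t) \<bullet> (Z s - Z t)"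
      by (simp add: inner_diff_left inner_diff_right)
    ultimately show ?thesis by linarith
  qed
  have "((- c) *\<^sub>R gradf (Z t)) \<bullet> w \<ge> 0" by (rule mono_deriv[OF Gd Zd pos t])
  then have "- c * (gradf (Z t) \<bullet> w) \<ge> 0" by simp
  then show "gradf (Z t) \<bullet> w \<le> 0" using c by (simp add: mult_le_0_iff)
  have Zd': "(Z has_derivative (\<lambda>h. h *\<^sub>R w)) (at t within {0..})" using Zd by (simp add: has_vector_derivative_def)
  have Gd': "((\<lambda>s. gradg (Z s)) has_derivative (\<lambda>h. h *\<^sub>R ((- c) *\<^sub>R gradf (Z t)))) (at t within {0..})"
    using Gd by (simp add: has_vector_derivative_def)
  have fZ: "((\<lambda>s. f (Z s)) has_derivative (\<lambda>h. gradf (Z t) \<bullet> (h *\<^sub>R w))) (at t within {0..})"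
    by (rule has_derivative_compose[OF Zd' f_grad])
  then show "((\<lambda>s. f (Z s)) has_real_derivative (gradf (Z t) \<bullet> w)) (at t within {0..})"
    unfolding has_field_derivative_def by (simp add: mult.commute[of _ "gradf (Z t) \<bullet> w"])
  have gZ: "((\<lambda>s. g (Z s)) has_derivative (\<lambda>h. gradg (Z t) \<bullet> (h *\<^sub>R w))) (at t within {0..})"
    by (rule has_derivative_compose[OF Zd' g_grad])
  have "((\<lambda>s. g 0 - g (Z s) + gradg (Z s) \<bullet> Z s) has_derivative
     (\<lambda>h. 0 - gradg (Z t) \<bullet> (h *\<^sub>R w) + (gradg (Z t) \<bullet> (h *\<^sub>R w) + (h *\<^sub>R ((- c) *\<^sub>R gradf (Z t))) \<bullet> Z t))) (at t within {0..})"
    by (intro has_derivative_add has_derivative_diff has_derivative_const gZ has_derivative_inner Gd' Zd')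
  moreover have "(\<lambda>s. g 0 - g (Z s) + gradg (Z s) \<bullet> Z s) = (\<lambda>s. bregman g gradg 0 (Z s))"
    by (simp add: bregman_def fun_eq_iff inner_diff_right)
  moreover have "(\<lambda>h. 0 - gradg (Z t) \<bullet> (h *\<^sub>R w) + (gradg (Z t) \<bullet> (h *\<^sub>R w) + (h *\<^sub>R ((- c) *\<^sub>R gradf (Z t))) \<bullet> Z t))
     = (*) (- c * (gradf (Z t) \<bullet> Z t))"
    by (simp add: fun_eq_iff)
  ultimately show "((\<lambda>s. bregman g gradg 0 (Z s)) has_real_derivative (- c * (gradf (Z t) \<bullet> Z t))) (at t within {0..})"
    unfolding has_field_derivative_def by simp
qed


theorem theorem4:
  fixes f g :: "'a::euclidean_space \<Rightarrow> real"
    and gradf gradg :: "'a \<Rightarrow> 'a"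
    and L :: real
    and \<alpha> \<beta> d\<beta> :: "real \<Rightarrow> real"
  assumes f_grad: "\<And>x. (f has_derivative (\<lambda>h. gradf x \<bullet> h)) (at x)"
    and f_C1: "continuous_on UNIV gradf"
    and f_convex: "convex_on UNIV f"
    and L_pos: "L > 0"
    and f_smooth: "\<And>x y. norm (gradf x - gradf y) \<le> L * norm (x - y)"
    and f_min: "\<And>x. f 0 \<le> f x"
    and f_unique_min: "\<And>x. f x = f 0 \<Longrightarrow> x = 0"
    and f_zero: "f 0 = 0"
    and g_grad: "\<And>x. (g has_derivative (\<lambda>h. gradg x \<bullet> h)) (at x)"
    and g_C1: "continuous_on UNIV gradg"
    and g_strict_convex: "strict_convex_on UNIV g"
    and \<beta>_deriv: "\<And>t. t \<ge> 0 \<Longrightarrow> (\<beta> has_real_derivative d\<beta> t) (at t within {0..})"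
    and \<alpha>\<beta>: "\<And>t. t \<ge> 0 \<Longrightarrow> exp (\<alpha> t) \<ge> d\<beta> t \<and> d\<beta> t > 0"
    and \<beta>_infty: "filterlim \<beta> at_top at_top"
  shows
    "(\<forall>Z :: real \<Rightarrow> 'a.
        (\<forall>t\<ge>0. Z differentiable (at t within {0..})) \<and>
        (\<forall>t\<ge>0. ((\<lambda>s. gradg (Z s)) has_vector_derivative
                  (- exp (\<alpha> t + \<beta> t)) *\<^sub>R gradf (Z t)) (at t within {0..}))
      \<longrightarrow> (let E = (\<lambda>t. bregman g gradg 0 (Z t) + exp (\<beta> t) * f (Z t)) in
            (\<forall>s t. 0 \<le> s \<longrightarrow> s \<le> t \<longrightarrow> E t \<le> E s) \<and>
            (\<forall>t\<ge>0. f (Z t) \<le> exp (- \<beta> t) * E 0)))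
     \<and>
     (\<forall>(\<mu>::real) (Z :: real \<Rightarrow> 'a).
        \<mu> > 0 \<and>
        (\<forall>x y. bregman f gradf x y \<ge> \<mu> * bregman g gradg x y) \<and>
        (\<forall>t\<ge>0. Z differentiable (at t within {0..})) \<and>
        (\<forall>t\<ge>0. ((\<lambda>s. gradg (Z s)) has_vector_derivative
                  (- (exp (\<alpha> t) / \<mu>)) *\<^sub>R gradf (Z t)) (at t within {0..}))
      \<longrightarrow> (let E = (\<lambda>t. exp (\<beta> t) * (\<mu> * bregman g gradg 0 (Z t) + f (Z t))) in
            (\<forall>s t. 0 \<le> s \<longrightarrow> s \<le> t \<longrightarrow> E t \<le> E s) \<and>
            (\<forall>t\<ge>0. f (Z t) \<le> exp (- \<beta> t) * E 0)))"
proof -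
  have fcv: "convex_on UNIV f" by (rule f_convex)
  have gcv: "convex_on UNIV g" by (rule strict_imp_convex[OF g_strict_convex])
  have fnn: "f x \<ge> 0" for x using f_min[of x] f_zero by simp
  have Dnn: "bregman g gradg 0 x \<ge> 0" for x
    using tangent_ineq[OF gcv g_grad, of x 0] by (simp add: bregman_def)
  have fZ: "gradf x \<bullet> x \<ge> f x" for x
    using tangent_ineq[OF fcv f_grad, of x 0] f_zero by simp
  have expd: "((\<lambda>s. exp (\<beta> s)) has_real_derivative exp (\<beta> t) * d\<beta> t) (at t within {0..})" if "t \<ge> 0" for t
    by (rule DERIV_chain2[OF DERIV_exp \<beta>_deriv[OF that]])
  show ?thesis
  proof (intro conjI allI impI)
    fix Z :: "real \<Rightarrow> 'a"
    assume A: "(\<forall>t\<ge>0. Z differentiable (at t within {0..})) \<and>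
        (\<forall>t\<ge>0. ((\<lambda>s. gradg (Z s)) has_vector_derivative
                  (- exp (\<alpha> t + \<beta> t)) *\<^sub>R gradf (Z t)) (at t within {0..}))"
    define E where "E = (\<lambda>t. bregman g gradg 0 (Z t) + exp (\<beta> t) * f (Z t))"
    have dec: "E t \<le> E s" if st: "0 \<le> s" "s \<le> t" for s t
    proof (rule decr_from_deriv[OF _ st])
      fix t :: real assume t: "t \<ge> 0"
      define w where "w = vector_derivative Z (at t within {0..})"
      have Zd: "(Z has_vector_derivative w) (at t within {0..})"
        using A t unfolding w_def by (simp add: vector_derivative_works[symmetric])
      have Gd: "((\<lambda>s. gradg (Z s)) has_vector_derivative (- exp (\<alpha> t + \<beta> t)) *\<^sub>R gradf (Z t)) (at t within {0..})"
        using A t by blast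
      note C = core[OF f_grad g_grad gcv Zd Gd exp_gt_zero t]
      have "(E has_real_derivative (- exp (\<alpha> t + \<beta> t) * (gradf (Z t) \<bullet> Z t)) +
              (exp (\<beta> t) * d\<beta> t * f (Z t) + (gradf (Z t) \<bullet> w) * exp (\<beta> t))) (at t within {0..})"
        unfolding E_def by (intro DERIV_add DERIV_mult C(2,3) expd t)
      moreover have "(- exp (\<alpha> t + \<beta> t) * (gradf (Z t) \<bullet> Z t)) +
              (exp (\<beta> t) * d\<beta> t * f (Z t) + (gradf (Z t) \<bullet> w) * exp (\<beta> t)) \<le> 0"
      proof -
        have e: "exp (\<alpha> t + \<beta> t) = exp (\<beta> t) * exp (\<alpha> t)" by (simp add: exp_add)
        have 1: "exp (\<alpha> t + \<beta> t) * f (Z t) \<le> exp (\<alpha> t + \<beta> t) * (gradf (Z t) \<bullet> Z t)"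
          using fZ[of "Z t"] by simp
        have 2: "exp (\<beta> t) * d\<beta> t * f (Z t) \<le> exp (\<beta> t) * exp (\<alpha> t) * f (Z t)"
          using \<alpha>\<beta>[OF t] fnn[of "Z t"] by (intro mult_right_mono) auto
        have 3: "(gradf (Z t) \<bullet> w) * exp (\<beta> t) \<le> 0"
          using C(1) by (simp add: mult_le_0_iff)
        have 4: "- exp (\<alpha> t + \<beta> t) * (gradf (Z t) \<bullet> Z t) = - (exp (\<alpha> t + \<beta> t) * (gradf (Z t) \<bullet> Z t))" by simp
        show ?thesis unfolding 4 using 1 2[folded e] 3 by linarith
      qed
      ultimately show "\<exists>D. (E has_real_derivative D) (at t within {0..}) \<and> D \<le> 0" by blast
    qed
    have bnd: "f (Z t) \<le> exp (- \<beta> t) * E 0" if t: "t \<ge> 0" for t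
    proof -
      have "exp (\<beta> t) * f (Z t) \<le> E t" unfolding E_def using Dnn[of "Z t"] by simp
      also have "\<dots> \<le> E 0" using dec[of 0 t] t by simp
      finally have "exp (- \<beta> t) * (exp (\<beta> t) * f (Z t)) \<le> exp (- \<beta> t) * E 0" by simp
      then show ?thesis by (simp add: exp_minus field_simps)
    qed
    show "let E = (\<lambda>t. bregman g gradg 0 (Z t) + exp (\<beta> t) * f (Z t)) in
            (\<forall>s t. 0 \<le> s \<longrightarrow> s \<le> t \<longrightarrow> E t \<le> E s) \<and>
            (\<forall>t\<ge>0. f (Z t) \<le> exp (- \<beta> t) * E 0)"
      unfolding Let_def E_def[symmetric] using dec bnd by blast
  next
    fix \<mu> :: real and Z :: "real \<Rightarrow> 'a"
    assume A: "\<mu> > 0 \<and>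
        (\<forall>x y. bregman f gradf x y \<ge> \<mu> * bregman g gradg x y) \<and>
        (\<forall>t\<ge>0. Z differentiable (at t within {0..})) \<and>
        (\<forall>t\<ge>0. ((\<lambda>s. gradg (Z s)) has_vector_derivative
                  (- (exp (\<alpha> t) / \<mu>)) *\<^sub>R gradf (Z t)) (at t within {0..}))"
    then have mu: "\<mu> > 0" by blast
    have unif: "gradf x \<bullet> x \<ge> f x + \<mu> * bregman g gradg 0 x" for x
      using A f_zero unfolding bregman_def[of f] by (smt (verit) inner_minus_right diff_0)
    define E where "E = (\<lambda>t. exp (\<beta> t) * (\<mu> * bregman g gradg 0 (Z t) + f (Z t)))"
    have dec: "E t \<le> E s" if st: "0 \<le> s" "s \<le> t" for s t
    proof (rule decr_from_deriv[OF _ st])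
      fix t :: real assume t: "t \<ge> 0"
      define w where "w = vector_derivative Z (at t within {0..})"
      have Zd: "(Z has_vector_derivative w) (at t within {0..})"
        using A t unfolding w_def by (simp add: vector_derivative_works[symmetric])
      have Gd: "((\<lambda>s. gradg (Z s)) has_vector_derivative (- (exp (\<alpha> t) / \<mu>)) *\<^sub>R gradf (Z t)) (at t within {0..})"
        using A t by blast
      have cpos: "exp (\<alpha> t) / \<mu> > 0" using mu by simp
      note C = core[OF f_grad g_grad gcv Zd Gd cpos t]
      define P where "P = \<mu> * bregman g gradg 0 (Z t) + f (Z t)"
      have Pnn: "P \<ge> 0" unfolding P_def using Dnn[of "Z t"] fnn[of "Z t"] mu by simp
      have "(E has_real_derivative exp (\<beta> t) * d\<beta> t * P +
              (0 * bregman g gradg 0 (Z t) + (- (exp (\<alpha> t) / \<mu>) * (gradf (Z t) \<bullet> Z t)) * \<mu> + gradf (Z t) \<bullet> w) * exp (\<beta> t))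
              (at t within {0..})"
        unfolding E_def P_def by (intro DERIV_add DERIV_mult DERIV_const C(2,3) expd t)
      moreover have "exp (\<beta> t) * d\<beta> t * P +
              (0 * bregman g gradg 0 (Z t) + (- (exp (\<alpha> t) / \<mu>) * (gradf (Z t) \<bullet> Z t)) * \<mu> + gradf (Z t) \<bullet> w) * exp (\<beta> t) \<le> 0"
      proof -
        have e: "(- (exp (\<alpha> t) / \<mu>) * (gradf (Z t) \<bullet> Z t)) * \<mu> = - exp (\<alpha> t) * (gradf (Z t) \<bullet> Z t)"
          using mu by simp
        have 1: "exp (\<alpha> t) * P \<le> exp (\<alpha> t) * (gradf (Z t) \<bullet> Z t)"
          using unif[of "Z t"] unfolding P_def by simp
        have 2: "d\<beta> t * P \<le> exp (\<alpha> t) * P"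
          using \<alpha>\<beta>[OF t] Pnn by (intro mult_right_mono) auto
        have "d\<beta> t * P + (- exp (\<alpha> t) * (gradf (Z t) \<bullet> Z t) + gradf (Z t) \<bullet> w) \<le> 0"
          using 1 2 C(1) by linarith
        then have "exp (\<beta> t) * (d\<beta> t * P + (- exp (\<alpha> t) * (gradf (Z t) \<bullet> Z t) + gradf (Z t) \<bullet> w)) \<le> 0"
          by (simp add: mult_le_0_iff)
        then show ?thesis using e by (simp add: algebra_simps)
      qed
      ultimately show "\<exists>D. (E has_real_derivative D) (at t within {0..}) \<and> D \<le> 0" by blast
    qed
    have bnd: "f (Z t) \<le> exp (- \<beta> t) * E 0" if t: "t \<ge> 0" for t
    proof -
      have "exp (\<beta> t) * f (Z t) \<le> E t" unfolding E_def using Dnn[of "Z t"] mu by simp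
      also have "\<dots> \<le> E 0" using dec[of 0 t] t by simp
      finally have "exp (- \<beta> t) * (exp (\<beta> t) * f (Z t)) \<le> exp (- \<beta> t) * E 0" by simp
      then show ?thesis by (simp add: exp_minus field_simps)
    qed
    show "let E = (\<lambda>t. exp (\<beta> t) * (\<mu> * bregman g gradg 0 (Z t) + f (Z t))) in
            (\<forall>s t. 0 \<le> s \<longrightarrow> s \<le> t \<longrightarrow> E t \<le> E s) \<and>
            (\<forall>t\<ge>0. f (Z t) \<le> exp (- \<beta> t) * E 0)"
      unfolding Let_def E_def[symmetric] using dec bnd by blast
  qed
qed

end
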